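(* Consider the discrete first-price auction in the model without ties with $n\ge3$ bidders whose values are drawn independently and uniformly from $X=\{0,1,\dots,x\}$. If $$x>\frac{2^{1/(n-1)}}{2^{1/(n-1)}-1},$$ then the auction has no symmetric equilibrium.
   Context: Model. There are $n$ risk-neutral bidders competing for one indivisible object. Values and bids lie in $X=\{0,1,2,\dots,x\}$ for some $x\in\mathbb N$. Each bidder privately learns a value drawn independently and uniformly from $X$. Each bidder submits a bid in $X$. A (pure) strategy is a bidding function $\beta:X\to X$. In the model without ties, bidder $i$ wins iff $b_i>b_j$ for all $j\neq i$ (if the highest bid is tied, nobody wins). In the first-price auction, a bidder with value $v_i$ bidding $b_i$ gets expected payoff $(v_i-b_i)\Pr(i\text{ wins})$. An equilibrium is a profile of bidding functions such that each bidder's bidding function maximises their expected payoff given the others' bidding functions (a pure-strategy Bayes–Nash equilibrium) and such that no bidder uses a weakly dominated bidding function (a bidding function is weakly dominated if some other bidding function yields at least as high expected payoff against every profile of opponents' bidding functions, and strictly higher against some). A symmetric equilibrium is an equilibrium in which all bidders use the same bidding function. *)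

theory Defs
  imports Complex_Main
begin

text \<open>Values and bids lie in X = {0..x}. A bidding function is a map nat => nat
  sending X into X (its values outside X are irrelevant).\<close>

definition valid_bf :: "nat \<Rightarrow> (nat \<Rightarrow> nat) \<Rightarrow> bool" where
  "valid_bf x \<beta> \<longleftrightarrow> (\<forall>v\<le>x. \<beta> v \<le> x)"

text \<open>Probability of winning (no ties: win iff strictly highest bid) with bid b
  against opponents using the bidding functions in the list bs, values i.i.d.
  uniform on X.\<close>

definition win_prob :: "nat \<Rightarrow> (nat \<Rightarrow> nat) list \<Rightarrow> nat \<Rightarrow> real" where
  "win_prob x bs b = (\<Prod>\<gamma>\<leftarrow>bs. real (card {w\<in>{0..x}. \<gamma> w < b}) / real (x + 1))"

definition payoff :: "nat \<Rightarrow> (nat \<Rightarrow> nat) list \<Rightarrow> (nat \<Rightarrow> nat) \<Rightarrow> real" where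
  "payoff x bs \<beta> =
     (\<Sum>v\<in>{0..x}. (real v - real (\<beta> v)) * win_prob x bs (\<beta> v)) / real (x + 1)"

definition opp_profile :: "nat \<Rightarrow> nat \<Rightarrow> (nat \<Rightarrow> nat) list \<Rightarrow> bool" where
  "opp_profile n x bs \<longleftrightarrow> length bs = n - 1 \<and> (\<forall>\<gamma>\<in>set bs. valid_bf x \<gamma>)"

definition weakly_dominated :: "nat \<Rightarrow> nat \<Rightarrow> (nat \<Rightarrow> nat) \<Rightarrow> bool" where
  "weakly_dominated n x \<beta> \<longleftrightarrow>
     (\<exists>\<beta>'. valid_bf x \<beta>' \<and>
        (\<forall>bs. opp_profile n x bs \<longrightarrow> payoff x bs \<beta>' \<ge> payoff x bs \<beta>) \<and>
        (\<exists>bs. opp_profile n x bs \<and> payoff x bs \<beta>' > payoff x bs \<beta>))"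

definition sym_equilibrium :: "nat \<Rightarrow> nat \<Rightarrow> (nat \<Rightarrow> nat) \<Rightarrow> bool" where
  "sym_equilibrium n x \<beta> \<longleftrightarrow>
     valid_bf x \<beta> \<and>
     (\<forall>\<beta>'. valid_bf x \<beta>' \<longrightarrow>
        payoff x (replicate (n - 1) \<beta>) \<beta>' \<le> payoff x (replicate (n - 1) \<beta>) \<beta>) \<and>
     \<not> weakly_dominated n x \<beta>"

end

theory Submission
  imports Defs
begin

definition cnt :: "nat \<Rightarrow> (nat \<Rightarrow> nat) \<Rightarrow> nat \<Rightarrow> nat" where
  "cnt x \<beta> b = card {w\<in>{0..x}. \<beta> w < b}"

lemma wp_rep: "win_prob x (replicate k \<beta>) b = (real (cnt x \<beta> b) / real (x+1))^k"
  by (simp add: win_prob_def cnt_def map_replicate prod_list_replicate)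

lemma wp_nonneg: "win_prob x bs b \<ge> 0"
  unfolding win_prob_def by (induction bs) auto

lemma wp_zero: "1 \<le> b \<Longrightarrow> win_prob x (replicate m (\<lambda>_. 0)) b = 1"
  by (simp add: win_prob_def map_replicate prod_list_replicate)

lemma payoff_upd:
  assumes "v \<le> x"
  shows "payoff x bs (\<beta>(v:=b)) = payoff x bs \<beta> +
     ((real v - real b) * win_prob x bs b - (real v - real (\<beta> v)) * win_prob x bs (\<beta> v)) / real (x+1)"
proof -
  define f where "f = (\<lambda>g u. (real u - real (g u)) * win_prob x bs (g u))"
  have A: "(\<Sum>u\<in>{0..x}. f (\<beta>(v:=b)) u) = f (\<beta>(v:=b)) v + (\<Sum>u\<in>{0..x}-{v}. f (\<beta>(v:=b)) u)"
    using assms by (subst sum.remove[of _ v]) auto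
  have B: "(\<Sum>u\<in>{0..x}. f \<beta> u) = f \<beta> v + (\<Sum>u\<in>{0..x}-{v}. f \<beta> u)"
    using assms by (subst sum.remove[of _ v]) auto
  have C: "(\<Sum>u\<in>{0..x}-{v}. f (\<beta>(v:=b)) u) = (\<Sum>u\<in>{0..x}-{v}. f \<beta> u)"
    by (rule sum.cong) (auto simp: f_def)
  have "payoff x bs (\<beta>(v:=b)) = (\<Sum>u\<in>{0..x}. f (\<beta>(v:=b)) u) / real (x+1)"
    unfolding payoff_def f_def by simp
  also have "\<dots> = (f \<beta> v + (\<Sum>u\<in>{0..x}-{v}. f \<beta> u)) / real (x+1)
      + (f (\<beta>(v:=b)) v - f \<beta> v) / real (x+1)"
    using A C by (simp add: diff_divide_distrib add_divide_distrib)
  also have "\<dots> = payoff x bs \<beta> + (f (\<beta>(v:=b)) v - f \<beta> v) / real (x+1)"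
    using B unfolding payoff_def f_def by simp
  finally show ?thesis unfolding f_def by simp
qed

lemma opp0: "opp_profile n x (replicate (n-1) (\<lambda>_. 0))"
  by (simp add: opp_profile_def valid_bf_def)

lemma dom_above:
  assumes "valid_bf x \<beta>" "v \<le> x" "\<beta> v > v"
  shows "weakly_dominated n x \<beta>"
  unfolding weakly_dominated_def
proof (intro exI conjI allI impI)
  show "valid_bf x (\<beta>(v:=v))" using assms by (auto simp: valid_bf_def)
  fix bs
  have "(real v - real (\<beta> v)) * win_prob x bs (\<beta> v) \<le> 0"
    using assms(3) wp_nonneg[of x bs] by (simp add: mult_nonpos_nonneg)
  then show "payoff x bs (\<beta>(v:=v)) \<ge> payoff x bs \<beta>"
    unfolding payoff_upd[OF assms(2)] by (simp add: divide_nonpos_pos)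
next
  show "opp_profile n x (replicate (n-1) (\<lambda>_. 0))" by (rule opp0)
  have "win_prob x (replicate (n-1) (\<lambda>_. 0)) (\<beta> v) = 1" using assms(3) by (intro wp_zero) simp
  then show "payoff x (replicate (n-1) (\<lambda>_. 0)) (\<beta>(v:=v)) > payoff x (replicate (n-1) (\<lambda>_. 0)) \<beta>"
    unfolding payoff_upd[OF assms(2)] using assms(3) by (simp add: divide_pos_pos)
qed

lemma dom_eq:
  assumes "valid_bf x \<beta>" "v \<le> x" "\<beta> v = v" "v \<ge> 2"
  shows "weakly_dominated n x \<beta>"
  unfolding weakly_dominated_def
proof (intro exI conjI allI impI)
  show "valid_bf x (\<beta>(v:=v-1))" using assms by (auto simp: valid_bf_def)
  fix bs
  have "(real v - real (v-1)) * win_prob x bs (v-1) \<ge> 0"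
    using assms(4) wp_nonneg[of x bs] by simp
  then show "payoff x bs (\<beta>(v:=v-1)) \<ge> payoff x bs \<beta>"
    unfolding payoff_upd[OF assms(2)] using assms(3) by simp
next
  show "opp_profile n x (replicate (n-1) (\<lambda>_. 0))" by (rule opp0)
  have "win_prob x (replicate (n-1) (\<lambda>_. 0)) (v-1) = 1" using assms(4) by (intro wp_zero) simp
  then show "payoff x (replicate (n-1) (\<lambda>_. 0)) (\<beta>(v:=v-1)) > payoff x (replicate (n-1) (\<lambda>_. 0)) \<beta>"
    unfolding payoff_upd[OF assms(2)] using assms(3,4) by (simp add: of_nat_diff)
qed

lemma pow_ratio:
  fixes a c k :: nat
  assumes "2*a^2 < c^2" "a \<le> c" "k \<ge> 2"
  shows "2*a^k < c^k"
proof -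
  have k: "k = 2 + (k-2)" using assms(3) by simp
  have "c > 0" using assms(1) by (cases c) auto
  have "2*a^k = 2*a^2*a^(k-2)" by (metis k power_add mult.assoc)
  also have "\<dots> \<le> 2*a^2*c^(k-2)" by (simp add: power_mono assms(2))
  also have "\<dots> < c^2*c^(k-2)" using assms(1) \<open>c>0\<close> by simp
  also have "\<dots> = c^k" by (metis k power_add)
  finally show ?thesis .
qed


theorem proposition3:
  fixes n x :: nat
  assumes "n \<ge> 3"
    and "real x > 2 powr (1 / real (n - 1)) / (2 powr (1 / real (n - 1)) - 1)"
  shows "\<not> (\<exists>\<beta>. sym_equilibrium n x \<beta>)"
proof
  assume "\<exists>\<beta>. sym_equilibrium n x \<beta>"
  then obtain \<beta> where eq: "sym_equilibrium n x \<beta>" by blast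
  define k where "k = n - 1"
  have k2: "k \<ge> 2" using assms(1) k_def by simp
  have valid: "valid_bf x \<beta>"
    and br: "\<And>\<beta>'. valid_bf x \<beta>' \<Longrightarrow> payoff x (replicate k \<beta>) \<beta>' \<le> payoff x (replicate k \<beta>) \<beta>"
    and nd: "\<not> weakly_dominated n x \<beta>"
    using eq unfolding sym_equilibrium_def k_def by auto
  define F where "F = cnt x \<beta>"
  define t where "t = 2 powr (1 / real k)"
  have t1: "t > 1" unfolding t_def using k2 by (intro gr_one_powr) auto
  have tk: "t ^ k = 2"
  proof -
    have "t ^ k = t powr real k" unfolding t_def by (simp add: powr_realpow)
    also have "\<dots> = 2" unfolding t_def using k2 by (simp add: powr_powr)
    finally show ?thesis .
  qed
  have hx: "real x > t / (t - 1)" using assms(2) unfolding t_def k_def .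
  have "t / (t - 1) > 1" using t1 by (simp add: field_simps)
  then have x1: "real x > 1" using hx by linarith
  have "real x * (t - 1) > t" using hx t1 by (simp add: field_simps)
  then have "t * (real x - 1) > real x" by (simp add: algebra_simps)
  then have "(t * (real x - 1)) ^ k > real x ^ k"
    by (intro power_strict_mono) (use k2 in auto)
  then have "2 * (real x - 1) ^ k > real x ^ k" by (simp add: power_mult_distrib tk)
  then have "real (2 * (x-1)^k) > real (x ^ k)" using x1 by (simp add: of_nat_diff)
  then have hyp: "2 * (x-1)^k > x^k" by (simp only: of_nat_less_iff)
  have x4: "x \<ge> 4"
  proof (rule ccontr)
    assume "\<not> x \<ge> 4"
    then have "x = 2 \<or> x = 3" using x1 by auto
    then have "2 * (x-1)^k < x^k"
      by (elim disjE) (rule pow_ratio; use k2 in simp)+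
    then show False using hyp by simp
  qed
  have opt: "(real v - real b) * real (F b)^k \<le> (real v - real (\<beta> v)) * real (F (\<beta> v))^k"
    if "v \<le> x" "b \<le> x" for v b
  proof -
    have "valid_bf x (\<beta>(v:=b))" using valid \<open>b\<le>x\<close> by (auto simp: valid_bf_def)
    then have "payoff x (replicate k \<beta>) (\<beta>(v:=b)) \<le> payoff x (replicate k \<beta>) \<beta>" by (rule br)
    then have "(real v - real b) * win_prob x (replicate k \<beta>) b
       - (real v - real (\<beta> v)) * win_prob x (replicate k \<beta>) (\<beta> v) \<le> 0"
      unfolding payoff_upd[OF \<open>v\<le>x\<close>] by (simp add: divide_le_0_iff)
    then have "((real v - real b) * real (F b)^k - (real v - real (\<beta> v)) * real (F (\<beta> v))^k)
        / real (x+1)^k \<le> 0"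
      unfolding wp_rep F_def by (simp add: power_divide diff_divide_distrib)
    moreover have "real (x+1)^k > 0" by simp
    ultimately show ?thesis by (simp add: divide_le_0_iff not_le[symmetric])
  qed
  have bv_le: "\<beta> v \<le> v" if "v \<le> x" for v
    using dom_above[OF valid that] nd by force
  have b0: "\<beta> 0 = 0" using bv_le[of 0] by simp
  have bless: "\<beta> v \<le> v - 1" if "2 \<le> v" "v \<le> x" for v
    using dom_eq[OF valid that(2) _ that(1)] nd bv_le[OF that(2)] by force
  have opt_nat: "(v - b) * F b ^ k \<le> (v - \<beta> v) * F (\<beta> v) ^ k" if "v \<le> x" "b \<le> v" for v b
  proof -
    have "real ((v - b) * F b ^ k) \<le> real ((v - \<beta> v) * F (\<beta> v) ^ k)"
      using opt[of v b] that bv_le[OF that(1)] by (simp add: of_nat_diff)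
    then show ?thesis by (simp only: of_nat_le_iff)
  qed
  have fin: "finite {w\<in>{0..x}. \<beta> w < b}" for b by simp
  have F0: "F 0 = 0" unfolding F_def cnt_def by simp
  have Fpos: "F b \<ge> 1" if "b \<ge> 1" for b
  proof -
    have "0 \<in> {w\<in>{0..x}. \<beta> w < b}" using b0 that by simp
    then have "{w\<in>{0..x}. \<beta> w < b} \<noteq> {}" by blast
    then show ?thesis unfolding F_def cnt_def using fin[of b]
      by (simp add: Suc_le_eq card_gt_0_iff)
  qed
  have Fmono: "F b \<le> F b'" if "b \<le> b'" for b b'
    unfolding F_def cnt_def using that by (intro card_mono) auto
  have Flow: "F b \<ge> m + 1" if "m \<le> x" "\<And>w. w \<le> m \<Longrightarrow> \<beta> w < b" for m b
  proof -
    have "{0..m} \<subseteq> {w\<in>{0..x}. \<beta> w < b}" using that by auto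
    then have "card {0..m} \<le> F b" unfolding F_def cnt_def by (intro card_mono) auto
    then show ?thesis by simp
  qed
  have Fup: "F b \<le> m" if "\<And>w. m \<le> w \<Longrightarrow> w \<le> x \<Longrightarrow> b \<le> \<beta> w" for m b
  proof -
    have "{w\<in>{0..x}. \<beta> w < b} \<subseteq> {0..<m}" using that by (auto simp: not_le[symmetric])
    then have "F b \<le> card {0..<m}" unfolding F_def cnt_def by (intro card_mono) auto
    then show ?thesis by simp
  qed
  have mono: "\<beta> w \<le> \<beta> w'" if "w < w'" "w' \<le> x" for w w'
  proof (rule ccontr)
    assume "\<not> \<beta> w \<le> \<beta> w'"
    then have lt: "\<beta> w' < \<beta> w" by simp
    define P where "P = real (F (\<beta> w)) ^ k"
    define P' where "P' = real (F (\<beta> w')) ^ k"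
    have wx: "w \<le> x" using that by simp
    have h1: "(real w - real (\<beta> w')) * P' \<le> (real w - real (\<beta> w)) * P"
      using opt[of w "\<beta> w'"] wx valid that(2) unfolding P_def P'_def valid_bf_def by simp
    have h2: "(real w' - real (\<beta> w)) * P \<le> (real w' - real (\<beta> w')) * P'"
      using opt[of w' "\<beta> w"] wx valid that(2) unfolding P_def P'_def valid_bf_def by simp
    have PP: "P' \<le> P" unfolding P_def P'_def using Fmono[of "\<beta> w'" "\<beta> w"] lt
      by (intro power_mono) auto
    have Ppos: "P > 0" unfolding P_def using Fpos[of "\<beta> w"] lt by simp
    have "(real w' - real w) * P \<le> (real w' - real w) * P'"
      using h1 h2 by (simp add: algebra_simps)
    then have "P \<le> P'" using that(1) by (simp add: mult_le_cancel_left)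
    then have "P = P'" using PP by simp
    then have "(real w - real (\<beta> w')) * P \<le> (real w - real (\<beta> w)) * P" using h1 by simp
    then have "real w - real (\<beta> w') \<le> real w - real (\<beta> w)" using Ppos
      by (simp add: mult_le_cancel_right)
    then show False using lt by simp
  qed
  have b2: "\<beta> 2 = 1"
  proof -
    have "\<beta> 2 \<le> 1" using bless[of 2] x4 by simp
    moreover have "\<beta> 2 \<noteq> 0"
    proof
      assume "\<beta> 2 = 0"
      then have "(2 - 1) * F 1 ^ k \<le> (2 - 0) * F 0 ^ k" using opt_nat[of 2 1] x4 by simp
      moreover have "F 1 ^ k \<ge> 1" using Fpos[of 1] by simp
      ultimately show False using F0 k2 by (simp add: zero_power)
    qed
    ultimately show ?thesis by simp
  qed
  have b1: "\<beta> 1 \<le> 1" using mono[of 1 2] x4 b2 by simp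
  show False
  proof (cases "\<exists>v. 2 \<le> v \<and> v \<le> x \<and> \<beta> v \<noteq> v - 1")
    case False
    then have all: "\<And>v. 2 \<le> v \<Longrightarrow> v \<le> x \<Longrightarrow> \<beta> v = v - 1" by blast
    have u: "F (x-1) \<le> x" using all[of x] x4 by (intro Fup) auto
    have l: "F (x-2) \<ge> x - 1"
    proof -
      have "F (x-2) \<ge> (x-2) + 1"
      proof (rule Flow)
        fix w assume "w \<le> x - 2"
        then show "\<beta> w < x - 2" using all[of w] b0 b1 x4
          by (cases "w = 0"; cases "w = 1") auto
      qed simp
      then show ?thesis using x4 by simp
    qed
    have "(x - (x-2)) * F (x-2) ^ k \<le> (x - \<beta> x) * F (\<beta> x) ^ k" using opt_nat[of x "x-2"] by simp
    then have "2 * F (x-2) ^ k \<le> F (x-1) ^ k" using all[of x] x4 by simp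
    moreover have "(x-1)^k \<le> F (x-2) ^ k" using l by (rule power_mono) simp
    moreover have "F (x-1) ^ k \<le> x ^ k" using u by (rule power_mono) simp
    ultimately show False using hyp by linarith
  next
    case True
    then obtain v where v: "2 \<le> v \<and> v \<le> x \<and> \<beta> v \<noteq> v - 1"
      and vmin: "\<And>u. u < v \<Longrightarrow> \<not> (2 \<le> u \<and> u \<le> x \<and> \<beta> u \<noteq> u - 1)"
      using exists_least_iff[where P = "\<lambda>v. 2 \<le> v \<and> v \<le> x \<and> \<beta> v \<noteq> v - 1"] by blast
    have vx: "v \<le> x" using v by simp
    have v3: "v \<ge> 3" using v b2 by (cases "v = 2") auto
    have low: "\<beta> w = w - 1" if "2 \<le> w" "w < v" for w using vmin[of w] that vx by auto
    have prev: "\<beta> (v-1) = v - 2" using low[of "v-1"] v3 by simp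
    have bv: "\<beta> v = v - 2" using mono[of "v-1" v] prev bless[of v] v v3 by (simp, arith)
    have u: "F (v-2) \<le> v - 1"
    proof (rule Fup)
      fix w assume "v - 1 \<le> w" "w \<le> x"
      then show "v - 2 \<le> \<beta> w" using prev bv mono[of v w]
        by (cases "w = v - 1"; cases "w = v") auto
    qed
    have l1: "F (v-1) \<ge> v + 1"
    proof (rule Flow[OF vx])
      fix w assume "w \<le> v"
      then show "\<beta> w < v - 1" using low[of w] b0 b1 bv v3
        by (cases "w = 0"; cases "w = 1"; cases "w = v") auto
    qed
    have "(v - (v-1)) * F (v-1) ^ k \<le> (v - \<beta> v) * F (\<beta> v) ^ k" using opt_nat[of v "v-1"] vx by simp
    then have e1: "F (v-1) ^ k \<le> 2 * F (v-2) ^ k" using bv v3 by simp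
    have p1: "(v+1)^k \<le> F (v-1) ^ k" using l1 by (rule power_mono) simp
    have p2: "F (v-2) ^ k \<le> (v-1) ^ k" using u by (rule power_mono) simp
    have A: "(v+1)^k \<le> 2 * (v-1)^k" using e1 p1 p2 by linarith
    show False
    proof (cases "v \<le> 5")
      case True
      then have "v = 3 \<or> v = 4 \<or> v = 5" using v3 by auto
      then have "2 * (v-1)^k < (v+1)^k"
        by (elim disjE) (rule pow_ratio; use k2 in simp)+
      then show False using A by simp
    next
      case False
      have l3: "F (v-3) \<ge> (v-3) + 1"
      proof (rule Flow)
        fix w assume "w \<le> v - 3"
        then show "\<beta> w < v - 3" using low[of w] b0 b1 False
          by (cases "w = 0"; cases "w = 1") auto
      qed (use vx in simp)
      have "(v - 1 - (v-3)) * F (v-3) ^ k \<le> (v - 1 - \<beta> (v-1)) * F (\<beta> (v-1)) ^ k"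
        using opt_nat[of "v-1" "v-3"] vx by simp
      then have e2: "2 * F (v-3) ^ k \<le> F (v-2) ^ k" using prev False by simp
      have p3: "(v-2)^k \<le> F (v-3) ^ k" using l3 False by (intro power_mono) auto
      have B: "2 * (v-2)^k \<le> (v-1)^k" using e2 p2 p3 by linarith
      have "2 * (v-2)^k * (v+1)^k \<le> (v-1)^k * (2 * (v-1)^k)"
        by (rule mult_mono[OF B A]) auto
      then have "((v-2)*(v+1))^k \<le> ((v-1)*(v-1))^k" 
      proof -
        have "(v-2)^k * (v+1)^k \<le> (v-1)^k * (v-1)^k" using \<open>2 * (v-2)^k * (v+1)^k \<le> (v-1)^k * (2 * (v-1)^k)\<close> by simp
        then show ?thesis by (simp only: power_mult_distrib)
      qed
      then have C: "(v-2)*(v+1) \<le> (v-1)*(v-1)"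
        proof -
        have ks: "k = Suc (k-1)" using k2 by simp
        have "((v-2)*(v+1))^Suc(k-1) \<le> ((v-1)*(v-1))^Suc(k-1)"
          using \<open>((v-2)*(v+1))^k \<le> ((v-1)*(v-1))^k\<close> by (simp only: ks[symmetric])
        then show ?thesis by (rule power_le_imp_le_base) simp
      qed
      obtain u where u: "v = u + 6" using False by (intro that[of "v - 6"]) simp
      have "(u+4)*(u+7) \<le> (u+5)*(u+5)" using C unfolding u by (simp add: add.commute)
      then show False by (simp add: algebra_simps)
    qed
  qed
qed

end
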